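(* Let $I=[0,1]$ and $I'=[0',1']$ be two copies of the unit interval, and let $f\colon I\sqcup I'\to I$ be any continuous map with $f(0)=f(0')=0$ and $f(1)=f(1')=1$. Then $(0,0')$ and $(1,1')$ belong to the same connected component of $\Sigma_f$.
   Context: $\Sigma_f=\{(x,y)\in (I\sqcup I')^2: x\ne y,\ f(x)=f(y)\}$. *)

theory Defs
  imports "HOL-Analysis.Analysis"
begin

text \<open>The disjoint union I \<squnion> I' of two copies of [0,1]: the point (False, t) is t \<in> I,
  the point (True, t) is t' \<in> I'.\<close>
definition II :: "(bool \<times> real) topology" where
  "II = sum_topology (\<lambda>_. top_of_set {0..1}) UNIV"

definition Sigma_f :: "(bool \<times> real \<Rightarrow> real) \<Rightarrow> ((bool \<times> real) \<times> (bool \<times> real)) set" where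
  "Sigma_f f = {(x, y). x \<in> topspace II \<and> y \<in> topspace II \<and> x \<noteq> y \<and> f x = f y}"

end

theory Submission
  imports Defs
begin

lemma key:
  fixes g h :: "real \<Rightarrow> real"
  assumes cg: "continuous_on {0..1} g" and ch: "continuous_on {0..1} h"
    and rg: "g ` {0..1} \<subseteq> {0..1}" and rh: "h ` {0..1} \<subseteq> {0..1}"
    and g0: "g 0 = 0" and h0: "h 0 = 0" and g1: "g 1 = 1" and h1: "h 1 = 1"
  shows "connected_component_of (top_of_set {(s,t). s \<in> {0..1} \<and> t \<in> {0..1} \<and> g s = h t})
           (0,0) (1,1)"
proof (rule ccontr)
  define K where "K = {(s,t). s \<in> {0..1} \<and> t \<in> {0..1} \<and> g s = h t}"
  assume nc: "\<not> connected_component_of (top_of_set {(s,t). s \<in> {0..1} \<and> t \<in> {0..1} \<and> g s = h t}) (0,0) (1,1)"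
  hence nc: "\<not> connected_component_of (top_of_set K) ((0::real),(0::real)) (1,1)" unfolding K_def .
  have Keq: "K = {x \<in> {0..1} \<times> {0..1}. (\<lambda>x. g (fst x) - h (snd x)) x = 0}"
    unfolding K_def by auto
  have "continuous_on ({0..1} \<times> {0..1}) (\<lambda>x. g (fst x) - h (snd x))"
    by (intro continuous_intros continuous_on_compose2[OF cg] continuous_on_compose2[OF ch]) auto
  hence "closedin (top_of_set ({0..1} \<times> {0..1})) K"
    unfolding Keq by (rule continuous_closedin_preimage_constant)
  hence cK: "compact K"
    using closedin_compact compact_Times compact_Icc by blast
  have Ksub: "K \<subseteq> {0..1} \<times> {0..1}" unfolding K_def by auto
  have p0: "(0,0) \<in> K" and p1: "(1,1) \<in> K" unfolding K_def using g0 h0 g1 h1 by auto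
  have "separated_between (top_of_set K) {(0,0)} {(1,1)}"
  proof (rule cut_wire_fence_theorem)
    show "compact_space (top_of_set K)" using cK by (simp add: compact_space_subtopology)
    show "Hausdorff_space (top_of_set K)" by (simp add: Hausdorff_space_subtopology)
    show "closedin (top_of_set K) {(0,0)}" using p0 by (intro closed_subset) auto
    show "closedin (top_of_set K) {(1,1)}" using p1 by (intro closed_subset) auto
    fix C assume "connectedin (top_of_set K) C"
    then show "disjnt C {(0,0)} \<or> disjnt C {(1,1)}"
      using nc unfolding connected_component_of_def disjnt_def by blast
  qed
  then obtain U V where U: "closedin (top_of_set K) U" and V: "closedin (top_of_set K) V"
    and UV: "U \<union> V = K" "disjnt U V" "(0,0) \<in> U" "(1,1) \<in> V"
    unfolding separated_between_alt by auto
  have cU: "closed U" using U cK closedin_compact compact_imp_closed by blast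
  have cV: "closed V" using V cK closedin_compact compact_imp_closed by blast
  define A where "A = U \<union> (\<lambda>s::real. (s,s)) ` {-1..0} \<union> {-1..2} \<times> {-1::real}"
  define B where "B = V \<union> (\<lambda>s::real. (s,s)) ` {1..2} \<union> {-1..2} \<times> {2::real}"
  have cdiag: "compact ((\<lambda>s::real. (s,s)) ` {a..b})" for a b
    by (intro compact_continuous_image continuous_intros) auto
  have cA: "closed A" unfolding A_def
    by (intro closed_Un cU compact_imp_closed cdiag compact_Times compact_Icc) auto
  have cB: "closed B" unfolding B_def
    by (intro closed_Un cV compact_imp_closed cdiag compact_Times compact_Icc) auto
  have USub: "U \<subseteq> {0..1} \<times> {0..1}" "V \<subseteq> {0..1} \<times> {0..1}" using UV Ksub by auto
  have dAB: "A \<inter> B = {}"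
  proof -
    have "x \<notin> B" if "x \<in> A" for x
    proof -
      obtain s t where x: "x = (s,t)" by force
      have a1: False if "(s,s) \<in> U" "1 \<le> s" for s
      proof -
        have "s = 1" using that USub by auto
        thus False using that UV unfolding disjnt_def by auto
      qed
      have a2: False if "(s,s) \<in> V" "s \<le> 0" for s
      proof -
        have "s = 0" using that USub by auto
        thus False using that UV unfolding disjnt_def by auto
      qed
      show ?thesis using that USub UV a1 a2 unfolding A_def B_def x disjnt_def by auto
    qed
    thus ?thesis by blast
  qed
  obtain chi :: "real \<times> real \<Rightarrow> real" where
    cchi: "continuous_on UNIV chi" and chiA: "\<And>x. x \<in> A \<Longrightarrow> chi x = -1"
    and chiB: "\<And>x. x \<in> B \<Longrightarrow> chi x = 1"
    using Urysohn[OF cA cB dAB, of "-1" 1] by metis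
  define gg where "gg s = g (max 0 (min 1 s)) + (s - max 0 (min 1 s))" for s
  define hh where "hh s = h (max 0 (min 1 s)) + (s - max 0 (min 1 s))" for s
  have cgg: "continuous_on UNIV gg" unfolding gg_def
    by (intro continuous_intros continuous_on_compose2[OF cg]) auto
  have chh: "continuous_on UNIV hh" unfolding hh_def
    by (intro continuous_intros continuous_on_compose2[OF ch]) auto
  have gin: "s \<in> {0..1} \<Longrightarrow> gg s = g s" for s unfolding gg_def by auto
  have hin: "s \<in> {0..1} \<Longrightarrow> hh s = h s" for s unfolding hh_def by auto
  have glo: "s < 0 \<Longrightarrow> gg s = s" for s unfolding gg_def using g0 by auto
  have hlo: "s < 0 \<Longrightarrow> hh s = s" for s unfolding hh_def using h0 by auto
  have ghi: "s > 1 \<Longrightarrow> gg s = s" for s unfolding gg_def using g1 by auto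
  have hhi: "s > 1 \<Longrightarrow> hh s = s" for s unfolding hh_def using h1 by auto
  have grg: "s \<in> {0..1} \<Longrightarrow> g s \<in> {0..1}" for s using rg by (auto simp: image_subset_iff)
  have hrg: "s \<in> {0..1} \<Longrightarrow> h s \<in> {0..1}" for s using rh by (auto simp: image_subset_iff)
  have hbd: "t \<in> {-1..2} \<Longrightarrow> hh t \<in> {-1..2}" for t
  proof -
    assume t: "t \<in> {-1..2}"
    show ?thesis
    proof (cases "t < 0 \<or> t > 1")
      case True
      then show ?thesis using hlo hhi t by auto
    next
      case False
      then have "t \<in> {0..1}" by auto
      then show ?thesis using hin[of t] hrg[of t] by auto
    qed
  qed
  have hneg: "hh t < 0 \<Longrightarrow> t < 0" for t
  proof (rule ccontr)
    assume a: "hh t < 0" "\<not> t < 0"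
    show False
    proof (cases "t > 1")
      case True then show ?thesis using hhi a by auto
    next
      case False then have "t \<in> {0..1}" using a by auto
      then show ?thesis using hin[of t] hrg[of t] a by auto
    qed
  qed
  have hbig: "hh t > 1 \<Longrightarrow> t > 1" for t
  proof (rule ccontr)
    assume a: "hh t > 1" "\<not> t > 1"
    show False
    proof (cases "t < 0")
      case True then show ?thesis using hlo a by auto
    next
      case False then have "t \<in> {0..1}" using a by auto
      then show ?thesis using hin[of t] hrg[of t] a by auto
    qed
  qed
  have hmid: "hh t \<in> {0..1} \<Longrightarrow> t \<in> {0..1}" for t
  proof (rule ccontr)
    assume a: "hh t \<in> {0..1}" "t \<notin> {0..1}"
    then have "t < 0 \<or> t > 1" by auto
    then show False using hlo hhi a by auto
  qed
  define G where "G x = (max (-1) (min 2 (fst x - (gg (fst x) - hh (snd x)))),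
                         max (-1) (min 2 (snd x - chi x)))" for x :: "real \<times> real"
  have "continuous_on ({-1..2} \<times> {-1..2}) G" unfolding G_def
    by (intro continuous_intros continuous_on_compose2[OF cgg] continuous_on_compose2[OF chh]
          continuous_on_subset[OF cchi]) auto
  moreover have "G \<in> ({-1..2} \<times> {-1..2}) \<rightarrow> ({-1..2} \<times> {-1..2})"
    unfolding G_def by auto
  ultimately obtain x where xS: "x \<in> {-1..2} \<times> {-1..2}" and fx: "G x = x"
    using brouwer[of "{-1..2} \<times> {-1..2::real}" G]
    by (auto simp: compact_Times convex_Times)
  obtain s t where x: "x = (s,t)" by force
  have st: "s \<in> {-1..2}" "t \<in> {-1..2}" using xS x by auto
  have e1: "s = max (-1) (min 2 (s - (gg s - hh t)))" and e2: "t = max (-1) (min 2 (t - chi (s,t)))"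
    using fx unfolding x G_def by auto
  have F1: "gg s = hh t"
  proof -
    have "gg (-1) = -1" "gg 2 = 2" using glo ghi by auto
    moreover have "-1 \<le> hh t" "hh t \<le> 2" using hbd[OF st(2)] by auto
    ultimately show ?thesis using e1 st by (cases "s = -1"; cases "s = 2") (auto simp: max_def min_def split: if_splits)
  qed
  have F2: "chi (s,t) = 0"
  proof -
    have "t = -1 \<Longrightarrow> chi (s,t) = -1" using chiA st unfolding A_def by auto
    moreover have "t = 2 \<Longrightarrow> chi (s,t) = 1" using chiB st unfolding B_def by auto
    ultimately show ?thesis using e2 st by (cases "t = -1"; cases "t = 2") (auto simp: max_def min_def split: if_splits)
  qed
  have "(s,t) \<in> A \<union> B"
  proof (cases "s < 0")
    case True
    hence "hh t < 0" using F1 glo by auto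
    hence "t < 0" by (rule hneg)
    hence "t = s" using F1 glo hlo True by auto
    thus ?thesis using True st unfolding A_def by auto
  next
    case False
    show ?thesis
    proof (cases "s > 1")
      case True
      hence "hh t > 1" using F1 ghi by auto
      hence "t > 1" by (rule hbig)
      hence "t = s" using F1 ghi hhi True by auto
      thus ?thesis using True st unfolding B_def by auto
    next
      case False2: False
      hence s01: "s \<in> {0..1}" using False by auto
      have "hh t = g s" using F1 gin[OF s01] by simp
      hence "hh t \<in> {0..1}" using grg[OF s01] by simp
      hence t01: "t \<in> {0..1}" by (rule hmid)
      hence "(s,t) \<in> K" unfolding K_def using F1 gin hin s01 by auto
      thus ?thesis using UV unfolding A_def B_def by auto
    qed
  qed
  thus False using F2 chiA chiB by fastforce
qed

theorem lemma1:
  fixes f :: "bool \<times> real \<Rightarrow> real"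
  assumes "continuous_map II (top_of_set {0..1}) f"
    and "f (False, 0) = 0" and "f (True, 0) = 0"
    and "f (False, 1) = 1" and "f (True, 1) = 1"
  shows "connected_component_of (subtopology (prod_topology II II) (Sigma_f f))
           ((False, 0), (True, 0)) ((False, 1), (True, 1))"
proof -
  define g where "g s = f (False, s)" for s
  define h where "h s = f (True, s)" for s
  have inj: "continuous_map (top_of_set {0..1}) II (\<lambda>s. (b, s))" for b
    unfolding II_def by (rule continuous_map_component_injection) auto
  have "continuous_map (top_of_set {0..1}) (top_of_set {0..1}) (f \<circ> (\<lambda>s. (b, s)))" for b
    using continuous_map_compose[OF inj assms(1)] .
  hence cm: "continuous_on {0..1} (f \<circ> (\<lambda>s. (b, s)))" "(f \<circ> (\<lambda>s. (b, s))) ` {0..1} \<subseteq> {0..1}" for b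
    by (auto simp: continuous_map_subtopology_eu Pi_iff)
  have cg: "continuous_on {0..1} g" and ch: "continuous_on {0..1} h"
    using cm(1)[of False] cm(1)[of True] unfolding g_def h_def o_def by auto
  have rg: "g ` {0..1} \<subseteq> {0..1}" and rh: "h ` {0..1} \<subseteq> {0..1}"
    using cm(2)[of False] cm(2)[of True] unfolding g_def h_def o_def by auto
  define K where "K = {(s,t). s \<in> {0..1::real} \<and> t \<in> {0..1::real} \<and> g s = h t}"
  have cc: "connected_component_of (top_of_set K) (0,0) (1,1)"
    unfolding K_def
    by (rule key[OF cg ch rg rh]) (use assms in \<open>auto simp: g_def h_def\<close>)
  define e where "e x = ((False, fst x), (True, snd x))" for x :: "real \<times> real"
  have fstc: "continuous_map (top_of_set K) (top_of_set {0..1}) fst"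
    by (auto simp: continuous_map_subtopology_eu K_def intro: continuous_intros)
  have sndc: "continuous_map (top_of_set K) (top_of_set {0..1}) snd"
    by (auto simp: continuous_map_subtopology_eu K_def intro: continuous_intros)
  have "continuous_map (top_of_set K) (prod_topology II II) e"
    unfolding e_def
    using continuous_map_compose[OF fstc inj[of False]] continuous_map_compose[OF sndc inj[of True]]
    by (auto simp: continuous_map_pairwise o_def)
  moreover have "e ` K \<subseteq> Sigma_f f"
    unfolding e_def K_def Sigma_f_def II_def by (auto simp: g_def h_def)
  ultimately have "continuous_map (top_of_set K) (subtopology (prod_topology II II) (Sigma_f f)) e"
    by (simp add: continuous_map_in_subtopology image_subset_iff_funcset)
  from connected_component_of_continuous_image[OF this cc]
  show ?thesis by (simp add: e_def)
qed

end
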